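(* Let $S$ be a semigroup with finite $\mathcal{R}$-height, and let $A$ be a left ideal of $S$. Let $n$ be the maximum length of a chain of $\mathcal{R}$-classes of $S$ each of which intersects $A$. Then $\mathrm{H}_{\mathcal{R}}(A)\leq 2n$.
   Context: For a semigroup $S$, $S^1$ denotes $S$ with an identity adjoined if necessary. Green's preorder: $a\leq_{\mathcal{R}} b$ iff $aS^1\subseteq bS^1$; $\mathcal{R}$ is the associated equivalence. $\mathcal{R}$-classes are ordered by $R_a\leq R_b$ iff $a\leq_{\mathcal{R}} b$, and the $\mathcal{R}$-height $\mathrm{H}_{\mathcal{R}}(S)$ is the supremum of the cardinalities of chains of $\mathcal{R}$-classes. A left ideal is a non-empty subset $A$ with $SA\subseteq A$; $\mathrm{H}_{\mathcal{R}}(A)$ is computed in the semigroup $A$ itself. *)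

theory Defs
  imports Main "HOL-Library.Extended_Nat"
begin

text \<open>The semigroup S is the whole type 'a (class semigroup_mult). Green's relations
are computed inside a subsemigroup T (T = UNIV for S itself), with T^1 = T plus identity.\<close>

definition R_le :: "'a::semigroup_mult set \<Rightarrow> 'a \<Rightarrow> 'a \<Rightarrow> bool" where
  "R_le T a b \<longleftrightarrow> a = b \<or> (\<exists>x\<in>T. a = b * x)"

definition R_class :: "'a::semigroup_mult set \<Rightarrow> 'a \<Rightarrow> 'a set" where
  "R_class T a = {b \<in> T. R_le T a b \<and> R_le T b a}"

definition R_classes :: "'a::semigroup_mult set \<Rightarrow> 'a set set" where
  "R_classes T = R_class T ` T"

definition R_class_le :: "'a::semigroup_mult set \<Rightarrow> 'a set \<Rightarrow> 'a set \<Rightarrow> bool" where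
  "R_class_le T X Y \<longleftrightarrow> (\<exists>a\<in>T. \<exists>b\<in>T. X = R_class T a \<and> Y = R_class T b \<and> R_le T a b)"

definition R_chain :: "'a::semigroup_mult set \<Rightarrow> 'a set set \<Rightarrow> bool" where
  "R_chain T C \<longleftrightarrow> C \<subseteq> R_classes T \<and> (\<forall>X\<in>C. \<forall>Y\<in>C. R_class_le T X Y \<or> R_class_le T Y X)"

text \<open>R-height: supremum of cardinalities of chains of R-classes (finite chains suffice,
since an infinite chain has arbitrarily large finite subchains).\<close>
definition R_height :: "'a::semigroup_mult set \<Rightarrow> enat" where
  "R_height T = Sup {enat (card C) | C. finite C \<and> R_chain T C}"

definition left_ideal :: "'a::semigroup_mult set \<Rightarrow> bool" where
  "left_ideal A \<longleftrightarrow> A \<noteq> {} \<and> (\<forall>s a. a \<in> A \<longrightarrow> s * a \<in> A)"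

end

theory Submission
  imports Defs
begin

lemma li_closed: "left_ideal A \<Longrightarrow> x \<in> A \<Longrightarrow> y \<in> A \<Longrightarrow> x * y \<in> A"
  unfolding left_ideal_def by blast

lemma three: assumes "finite S" "2 < card S" shows "\<exists>a b c. a \<in> S \<and> b \<in> S \<and> c \<in> S \<and> a \<noteq> b \<and> a \<noteq> c \<and> b \<noteq> c"
proof (rule ccontr)
  assume n: "\<not> ?thesis"
  from assms have "S \<noteq> {}" by auto
  then obtain a where a: "a \<in> S" by blast
  show False
  proof (cases "S - {a} = {}")
    case True then have "S \<subseteq> {a}" by blast
    then have "card S \<le> card {a}" by (intro card_mono) auto
    then show False using assms by simp
  next
    case False
    then obtain b where b: "b \<in> S" "b \<noteq> a" by blast
    have "S \<subseteq> {a, b}" using n a b by blast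
    then have "card S \<le> card {a, b}" by (intro card_mono) auto
    also have "\<dots> \<le> 2" by (simp add: card_insert_if)
    finally show False using assms by simp
  qed
qed

lemma R_le_refl: "R_le T a a" by (simp add: R_le_def)

lemma R_le_trans:
  assumes cl: "\<And>x y. x \<in> T \<Longrightarrow> y \<in> T \<Longrightarrow> x * y \<in> T"
    and "R_le T a b" "R_le T b c" shows "R_le T a c"
  using assms(2,3) unfolding R_le_def
  by (metis cl mult.assoc)

lemma R_le_mono: "R_le A a b \<Longrightarrow> R_le UNIV a b"
  unfolding R_le_def by blast

lemma class_eq:
  assumes cl: "\<And>x y. x \<in> T \<Longrightarrow> y \<in> T \<Longrightarrow> x * y \<in> T"
    and "p \<in> R_class T q" shows "R_class T p = R_class T q"
  using assms(2) R_le_trans[OF cl] unfolding R_class_def by blast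

lemma key:
  assumes "left_ideal A" "R_le A p q" "\<not> R_le A q p" "R_le UNIV q r"
  shows "R_le A p r"
proof -
  from assms(2,3) obtain x where x: "x \<in> A" "p = q * x"
    unfolding R_le_def by (metis R_le_refl)
  from assms(4) have "q = r \<or> (\<exists>u. q = r * u)" unfolding R_le_def by blast
  then show ?thesis
  proof
    assume "q = r" then show ?thesis using x unfolding R_le_def by blast
  next
    assume "\<exists>u. q = r * u"
    then obtain u where "q = r * u" by blast
    then have "p = r * (u * x)" using x by (simp add: mult.assoc)
    moreover have "u * x \<in> A" using assms(1) x unfolding left_ideal_def by blast
    ultimately show ?thesis unfolding R_le_def by blast
  qed
qed

theorem theorem3p8:
  fixes A :: "'a::semigroup_mult set"
  assumes "R_height (UNIV :: 'a set) < \<infinity>"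
    and "left_ideal A"
  shows "R_height A \<le>
    2 * Sup {enat (card C) | C. finite C \<and> R_chain (UNIV :: 'a set) C \<and> (\<forall>X\<in>C. X \<inter> A \<noteq> {})}"
  (is "_ \<le> 2 * Sup ?B")
proof -
  have clA: "\<And>x y. x \<in> A \<Longrightarrow> y \<in> A \<Longrightarrow> x * y \<in> A" using li_closed[OF assms(2)] .
  have clU: "\<And>x y. x \<in> (UNIV::'a set) \<Longrightarrow> y \<in> UNIV \<Longrightarrow> x * y \<in> UNIV" by simp
  define rep where "rep X = (SOME p. p \<in> X)" for X :: "'a set"
  define f where "f X = R_class UNIV (rep X)" for X
  have bound: "enat (card C) \<le> 2 * Sup ?B" if C: "finite C" "R_chain A C" for C
  proof -
    have sub: "C \<subseteq> R_classes A" and cmp: "\<forall>X\<in>C. \<forall>Y\<in>C. R_class_le A X Y \<or> R_class_le A Y X"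
      using C(2) unfolding R_chain_def by auto
    have repX: "rep X \<in> X \<and> rep X \<in> A \<and> X = R_class A (rep X)" if "X \<in> C" for X
    proof -
      from sub that obtain a where a: "a \<in> A" "X = R_class A a" unfolding R_classes_def by auto
      then have "a \<in> X" unfolding R_class_def by (simp add: R_le_refl)
      then have "rep X \<in> X" unfolding rep_def by (rule someI)
      moreover then have "rep X \<in> A" using a unfolding R_class_def by auto
      moreover have "X = R_class A (rep X)" using class_eq[OF clA, of "rep X" a] a \<open>rep X \<in> X\<close> by simp
      ultimately show ?thesis by blast
    qed
    have le_rep: "R_le A (rep X) (rep Y)" if "X \<in> C" "Y \<in> C" "R_class_le A X Y" for X Y
    proof -
      from that(3) obtain a b where ab: "a \<in> A" "b \<in> A" "X = R_class A a" "Y = R_class A b" "R_le A a b"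
        unfolding R_class_le_def by blast
      have "R_le A (rep X) a" using repX[OF that(1)] ab(3) unfolding R_class_def by auto
      moreover have "R_le A b (rep Y)"
        using repX[OF that(2)] ab(4) unfolding R_class_def by auto
      ultimately show ?thesis using ab(5) R_le_trans[OF clA] by blast
    qed
    have cmp_rep: "R_le A (rep X) (rep Y) \<or> R_le A (rep Y) (rep X)" if "X \<in> C" "Y \<in> C" for X Y
      using cmp le_rep that by blast
    have strict: "\<not> (R_le A (rep X) (rep Y) \<and> R_le A (rep Y) (rep X))"
      if "X \<in> C" "Y \<in> C" "X \<noteq> Y" for X Y
    proof
      assume h: "R_le A (rep X) (rep Y) \<and> R_le A (rep Y) (rep X)"
      have "rep X \<in> R_class A (rep Y)" using h repX[OF that(1)] unfolding R_class_def by auto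
      then have "R_class A (rep X) = R_class A (rep Y)" using class_eq[OF clA] by blast
      then show False using repX that by metis
    qed
    have fib: "R_le UNIV (rep X) (rep Y)" if "X \<in> C" "Y \<in> C" "f X = f Y" for X Y
    proof -
      have "rep X \<in> f X" unfolding f_def R_class_def by (simp add: R_le_refl)
      then have "rep X \<in> R_class UNIV (rep Y)" using that(3) f_def by simp
      then show ?thesis unfolding R_class_def by simp
    qed
    have fib2: "card {X \<in> C. f X = Y} \<le> 2" for Y
    proof (rule ccontr)
      assume "\<not> card {X \<in> C. f X = Y} \<le> 2"
      then have "2 < card {X \<in> C. f X = Y}" by simp
      then obtain X1 X2 X3 where d: "X1 \<in> C" "X2 \<in> C" "X3 \<in> C" "f X1 = Y" "f X2 = Y" "f X3 = Y"
        "X1 \<noteq> X2" "X1 \<noteq> X3" "X2 \<noteq> X3"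
        using three[of "{X \<in> C. f X = Y}"] C(1) by auto
      let ?p1 = "rep X1" and ?p2 = "rep X2" and ?p3 = "rep X3"
      have u: "R_le UNIV (rep Xi) (rep Xj)" if "Xi \<in> {X1,X2,X3}" "Xj \<in> {X1,X2,X3}" for Xi Xj
        using fib d that by auto
      have k: "R_le A (rep Xi) (rep Xk)" if "Xi \<in> {X1,X2,X3}" "Xj \<in> {X1,X2,X3}" "Xk \<in> {X1,X2,X3}"
        "R_le A (rep Xi) (rep Xj)" "\<not> R_le A (rep Xj) (rep Xi)" for Xi Xj Xk
        using key[OF assms(2) that(4,5) u[OF that(2,3)]] .
      have c12: "R_le A ?p1 ?p2 \<or> R_le A ?p2 ?p1" using cmp_rep d by blast
      have c13: "R_le A ?p1 ?p3 \<or> R_le A ?p3 ?p1" using cmp_rep d by blast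
      have c23: "R_le A ?p2 ?p3 \<or> R_le A ?p3 ?p2" using cmp_rep d by blast
      have s12: "\<not> (R_le A ?p1 ?p2 \<and> R_le A ?p2 ?p1)" using strict d by blast
      have s13: "\<not> (R_le A ?p1 ?p3 \<and> R_le A ?p3 ?p1)" using strict d by blast
      have s23: "\<not> (R_le A ?p2 ?p3 \<and> R_le A ?p3 ?p2)" using strict d by blast
      show False
        using c12 c13 c23 s12 s13 s23 k[of X1 X2 X3] k[of X1 X3 X2] k[of X2 X1 X3] k[of X2 X3 X1]
          k[of X3 X1 X2] k[of X3 X2 X1] by auto
    qed
    have "card C = card (\<Union>Y\<in>f ` C. {X \<in> C. f X = Y})" by (rule arg_cong[where f=card]) auto
    also have "\<dots> \<le> (\<Sum>Y\<in>f ` C. card {X \<in> C. f X = Y})" using C(1) by (intro card_UN_le) simp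
    also have "\<dots> \<le> (\<Sum>Y\<in>f ` C. 2)" by (intro sum_mono fib2)
    also have "\<dots> = 2 * card (f ` C)" by simp
    finally have c1: "card C \<le> 2 * card (f ` C)" .
    have "R_chain UNIV (f ` C)"
      unfolding R_chain_def
    proof
      show "f ` C \<subseteq> R_classes UNIV" unfolding f_def R_classes_def by auto
      show "\<forall>X\<in>f ` C. \<forall>Y\<in>f ` C. R_class_le UNIV X Y \<or> R_class_le UNIV Y X"
        unfolding R_class_le_def f_def using cmp_rep R_le_mono by blast
    qed
    moreover have "\<forall>X\<in>f ` C. X \<inter> A \<noteq> {}"
    proof
      fix Z assume "Z \<in> f ` C"
      then obtain X where "X \<in> C" "Z = f X" by blast
      then have "rep X \<in> Z \<inter> A" using repX unfolding f_def R_class_def by (auto simp: R_le_refl)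
      then show "Z \<inter> A \<noteq> {}" by blast
    qed
    ultimately have "enat (card (f ` C)) \<in> ?B" using C(1) by blast
    then have "enat (card (f ` C)) \<le> Sup ?B" by (rule Sup_upper)
    then have "2 * enat (card (f ` C)) \<le> 2 * Sup ?B" by (rule mult_left_mono) simp
    moreover have "enat (card C) \<le> 2 * enat (card (f ` C))" using c1
      by (metis enat_ord_simps(1) numeral_eq_enat times_enat_simps(1))
    ultimately show ?thesis by (rule order_trans[rotated])
  qed
  show ?thesis unfolding R_height_def
    by (rule Sup_least) (use bound in blast)
qed

end
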